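(* Let $f\ge 1$ and $k\ge 2$ be integers and let there be $n=kf+1$ validators, each maintaining a local DAG as described in the context (DAG-Rider setting). Let $p_i$ be a correct validator, let $w$ be a wave, and let $v\in DAG_i[\mathit{round}(w,1)]$ be the leader vertex of wave $w$. Suppose $p_i$ commits $v$, i.e. at least $(k-1)f+1$ vertices of $DAG_i[\mathit{round}(w,4)]$ have a path to $v$. Then for every validator $p_j$, every wave $w'>w$, and every leader vertex $v'$ of wave $w'$ with $v'\in DAG_j[\mathit{round}(w',1)]$ (the leader of wave $w'$ is the $\mathit{round}(w',1)$ vertex of an arbitrary validator, selected by a shared coin), there is a path from $v'$ to $v$.
   Context: Setting: $n=kf+1$ validators $p_1,\dots,p_n$, of which at most $f$ are Byzantine and the rest are correct (honest). All validators' local DAGs are subsets of one common set of vertices. Each vertex has a round number $r\ge 1$ and a source validator; for each validator and each round there is at most one vertex (no equivocation), so any two local DAGs that contain the vertex of a given validator for a given round contain the identical vertex, with identical edges. Every vertex of round $r\ge 2$ has edges to exactly $(k-1)f+1$ vertices of round $r-1$, all with distinct sources. Each validator $p_i$ has a local DAG $DAG_i$, a set of vertices closed under edges (if $u\in DAG_i$ then every vertex $u$ has an edge to is in $DAG_i$). $DAG_i[r]$ denotes the set of round-$r$ vertices of $DAG_i$. $\mathit{path}(u,v)$ ("a path from $u$ to $v$") means there is a sequence of contiguous edges leading from $u$ to $v$. Rounds are grouped into waves of 4 rounds: $\mathit{round}(w,j)=4(w-1)+j$ for $j=1,2,3,4$ and waves $w\ge 1$. *)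

theory Defs
  imports Main
begin

text \<open>Round number of the j-th round of wave w (waves start at 1, j in 1..4).\<close>
definition wave_round :: "nat \<Rightarrow> nat \<Rightarrow> nat" where
  "wave_round w j = 4 * (w - 1) + j"

definition dag_path :: "('v \<Rightarrow> 'v \<Rightarrow> bool) \<Rightarrow> 'v \<Rightarrow> 'v \<Rightarrow> bool" where
  "dag_path E u v = E\<^sup>+\<^sup>+ u v"

text \<open>Validators are 1..n with n = k*f+1. V is the common
  set of vertices, rnd/src give round and source, E u x means u has an edge to x.\<close>
definition dag_setting ::
  "nat \<Rightarrow> nat \<Rightarrow> nat \<Rightarrow> 'v set \<Rightarrow> ('v \<Rightarrow> nat) \<Rightarrow> ('v \<Rightarrow> nat) \<Rightarrow> ('v \<Rightarrow> 'v \<Rightarrow> bool)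
    \<Rightarrow> (nat \<Rightarrow> 'v set) \<Rightarrow> nat set \<Rightarrow> bool" where
  "dag_setting f k n V rnd src E DAG Correct \<longleftrightarrow>
     n = k * f + 1 \<and>
     Correct \<subseteq> {1..n} \<and> card ({1..n} - Correct) \<le> f \<and>
     (\<forall>u\<in>V. rnd u \<ge> 1 \<and> src u \<in> {1..n}) \<and>
     (\<forall>u\<in>V. \<forall>u'\<in>V. rnd u = rnd u' \<and> src u = src u' \<longrightarrow> u = u') \<and>
     (\<forall>u x. E u x \<longrightarrow> u \<in> V \<and> x \<in> V \<and> rnd u \<ge> 2 \<and> rnd x = rnd u - 1) \<and>
     (\<forall>u\<in>V. rnd u \<ge> 2 \<longrightarrow>
        finite {x. E u x} \<and> card {x. E u x} = (k - 1) * f + 1 \<and> inj_on src {x. E u x}) \<and>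
     (\<forall>i\<in>{1..n}. DAG i \<subseteq> V \<and> (\<forall>u\<in>DAG i. \<forall>x. E u x \<longrightarrow> x \<in> DAG i))"

end

theory Submission
  imports Defs
begin

theorem lemma1:
  fixes f k n :: nat and V :: "'v set" and rnd src :: "'v \<Rightarrow> nat"
    and E :: "'v \<Rightarrow> 'v \<Rightarrow> bool" and DAG :: "nat \<Rightarrow> 'v set" and Correct :: "nat set"
    and leader :: "nat \<Rightarrow> nat"
    and i w :: nat and v :: 'v
  assumes "f \<ge> 1" and "k \<ge> 2"
    and setting: "dag_setting f k n V rnd src E DAG Correct"
    and leader_valid: "\<forall>w. leader w \<in> {1..n}"
    and "i \<in> Correct" and "w \<ge> 1"
    and "v \<in> DAG i" and "rnd v = wave_round w 1" and "src v = leader w"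
    and commit: "finite {u \<in> DAG i. rnd u = wave_round w 4 \<and> dag_path E u v}"
      "card {u \<in> DAG i. rnd u = wave_round w 4 \<and> dag_path E u v} \<ge> (k - 1) * f + 1"
  shows "\<forall>j \<in> {1..n}. \<forall>w' > w. \<forall>v' \<in> DAG j.
           rnd v' = wave_round w' 1 \<and> src v' = leader w' \<longrightarrow> dag_path E v' v"
proof -
  define S where "S = {u \<in> DAG i. rnd u = wave_round w 4 \<and> dag_path E u v}"
  note st = setting[unfolded dag_setting_def]
  have nn: "n = k * f + 1" using st by blast
  have iin: "i \<in> {1..n}" using st \<open>i \<in> Correct\<close> by blast
  have SV: "S \<subseteq> V" using st iin unfolding S_def by blast
  have srcV: "\<forall>u\<in>V. src u \<in> {1..n}" using st by blast
  have uniq: "\<forall>u\<in>V. \<forall>u'\<in>V. rnd u = rnd u' \<and> src u = src u' \<longrightarrow> u = u'" using st by blast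
  have edge: "\<forall>u x. E u x \<longrightarrow> u \<in> V \<and> x \<in> V \<and> rnd u \<ge> 2 \<and> rnd x = rnd u - 1" using st by blast
  have outs: "\<forall>u\<in>V. rnd u \<ge> 2 \<longrightarrow>
        finite {x. E u x} \<and> card {x. E u x} = (k - 1) * f + 1 \<and> inj_on src {x. E u x}"
    using st by blast
  have injS: "inj_on src S"
  proof (rule inj_onI)
    fix x y assume "x \<in> S" "y \<in> S" "src x = src y"
    moreover have "rnd x = rnd y" using \<open>x \<in> S\<close> \<open>y \<in> S\<close> unfolding S_def by simp
    ultimately show "x = y" using uniq SV by blast
  qed
  have A: "\<exists>x\<in>S. E u x" if uV: "u \<in> V" and ur: "rnd u = wave_round w 4 + 1" for u
  proof (rule ccontr)
    assume no: "\<not> (\<exists>x\<in>S. E u x)"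
    let ?N = "{x. E u x}"
    have r2: "rnd u \<ge> 2" using ur by (simp add: wave_round_def)
    have fN: "finite ?N" and cN: "card ?N = (k - 1) * f + 1" and iN: "inj_on src ?N"
      using outs uV r2 by auto
    have NV: "?N \<subseteq> V" using edge by blast
    have fS: "finite S" using commit(1) S_def by simp
    have cS: "card S \<ge> (k - 1) * f + 1" using commit(2) S_def by simp
    have disj: "src ` S \<inter> src ` ?N = {}"
    proof (rule ccontr)
      assume "src ` S \<inter> src ` ?N \<noteq> {}"
      then obtain a b where a: "a \<in> S" and b: "b \<in> ?N" and ab: "src a = src b" by blast
      have "rnd b = wave_round w 4" using edge b ur by auto
      moreover have "rnd a = wave_round w 4" using a S_def by simp
      moreover have "a \<in> V" "b \<in> V" using a b SV NV by blast+
      ultimately have "a = b" using uniq ab by metis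
      then show False using no a b by blast
    qed
    have sub: "src ` S \<union> src ` ?N \<subseteq> {1..n}" using srcV SV NV by blast
    have "card (src ` S \<union> src ` ?N) = card S + card ?N"
      using card_Un_disjoint[OF finite_imageI[OF fS] finite_imageI[OF fN] disj]
        card_image[OF injS] card_image[OF iN] by simp
    moreover have "card (src ` S \<union> src ` ?N) \<le> n"
      using card_mono[OF _ sub] by simp
    ultimately have "card S + card ?N \<le> k * f + 1" using nn by linarith
    then have "(k - 1) * f + 1 + ((k - 1) * f + 1) \<le> k * f + 1" using cS cN by linarith
    moreover have "(k - 1) * f \<ge> f" using \<open>k \<ge> 2\<close> by (simp add: Suc_le_eq)
    moreover have "k * f = (k - 1) * f + f" using \<open>k \<ge> 2\<close>
    proof -
      have "k = Suc (k - 1)" using \<open>k \<ge> 2\<close> by simp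
      then have "k * f = Suc (k - 1) * f" by simp
      then show ?thesis by simp
    qed
    ultimately show False by linarith
  qed
  have B: "\<forall>u\<in>V. rnd u = wave_round w 4 + 1 + d \<longrightarrow> dag_path E u v" for d
  proof (induction d)
    case 0
    show ?case
    proof (intro ballI impI)
      fix u assume "u \<in> V" "rnd u = wave_round w 4 + 1 + 0"
      then obtain x where "x \<in> S" "E u x" using A by auto
      then show "dag_path E u v" unfolding S_def dag_path_def by auto
    qed
  next
    case (Suc d)
    show ?case
    proof (intro ballI impI)
      fix u assume uV: "u \<in> V" and ur: "rnd u = wave_round w 4 + 1 + Suc d"
      have r2: "rnd u \<ge> 2" using ur by simp
      have "card {x. E u x} = (k - 1) * f + 1" using outs uV r2 by auto
      have "{x. E u x} \<noteq> {}"
      proof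
        assume "{x. E u x} = {}"
        then have "card {x. E u x} = 0" by (simp only: card.empty)
        with \<open>card {x. E u x} = (k - 1) * f + 1\<close> show False by linarith
      qed
      then obtain x where ex: "E u x" by auto
      have "x \<in> V" "rnd x = wave_round w 4 + 1 + d" using edge ex ur by auto
      then have "dag_path E x v" using Suc by blast
      then show "dag_path E u v" using ex unfolding dag_path_def by auto
    qed
  qed
  show ?thesis
  proof (intro ballI allI impI)
    fix j w' v'
    assume j: "j \<in> {1..n}" and ww: "w < w'" and v': "v' \<in> DAG j"
      and c: "rnd v' = wave_round w' 1 \<and> src v' = leader w'"
    have "v' \<in> V" using st j v' by blast
    moreover have "rnd v' = wave_round w 4 + 1 + (4 * (w' - 1) - 4 * w)"
      using c ww \<open>w \<ge> 1\<close> by (simp add: wave_round_def)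
    ultimately show "dag_path E v' v" using B by blast
  qed
qed

end
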